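(* Let $p$ be a prime and $G$ a finite $p$-group. Then $\mathfrak{p}_{H,p}=\mathfrak{p}_{K,p}$ for all $H,K\le G$. For a prime $q\ne p$ and $H,K\le G$, $\mathfrak{p}_{H,q}=\mathfrak{p}_{K,q}$ if and only if $H$ and $K$ are conjugate in $G$.
   Context: $A(H)$ is the Burnside ring of a finite group $H$; for $I\le H$ and $r$ a prime, $\varphi^I_{H,r}\colon A(H)\to\mathbb{Z}/r\mathbb{Z}$ is the ring map $X\mapsto|X^I|\bmod r$. The Burnside $G$-Tambara functor $\underline{A}_G$ has $\underline{A}_G(G/L)=A(L)$ (with restrictions, transfers $K\times_L-$, norms $\mathrm{Map}_L(K,-)$ and conjugations). For $K\le G$ and $r$ prime, $\mathfrak{p}_{K,r}$ is the ideal with $\mathfrak{p}_{K,r}(G/L)=\bigcap_{I\le L,\ I\preccurlyeq_GK}\ker(\varphi^I_{L,r})$, where $I\preccurlyeq_GK$ means $I$ is conjugate in $G$ to a subgroup of $K$. *)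

theory Defs
  imports "HOL-Algebra.Group_Action" "HOL-Computational_Algebra.Primes"
begin

text \<open>Finite L-sets: every finite L-set is isomorphic to one whose underlying set
is a finite subset of nat; an L-set is a pair (S, act) with act a group action
of L on S (HOL-Algebra group_action, i.e. a hom L -> BijGroup S).\<close>

type_synonym 'a gset = "nat set \<times> ('a \<Rightarrow> nat \<Rightarrow> nat)"

definition fin_gset :: "('a, 'b) monoid_scheme \<Rightarrow> 'a gset \<Rightarrow> bool" where
  "fin_gset L X \<longleftrightarrow> finite (fst X) \<and> group_action L (fst X) (snd X)"

definition gset_iso :: "('a, 'b) monoid_scheme \<Rightarrow> 'a gset \<Rightarrow> 'a gset \<Rightarrow> bool" where
  "gset_iso L X Y \<longleftrightarrow> (\<exists>f. bij_betw f (fst X) (fst Y) \<and>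
     (\<forall>g\<in>carrier L. \<forall>x\<in>fst X. f (snd X g x) = snd Y g (f x)))"

definition gset_plus :: "'a gset \<Rightarrow> 'a gset \<Rightarrow> 'a gset" where
  "gset_plus X Y =
     ((\<lambda>n. 2 * n) ` fst X \<union> (\<lambda>n. 2 * n + 1) ` fst Y,
      \<lambda>g m. if even m \<and> m div 2 \<in> fst X then 2 * snd X g (m div 2)
            else if odd m \<and> m div 2 \<in> fst Y then 2 * snd Y g (m div 2) + 1
            else undefined)"

text \<open>Grothendieck construction: a pair (X, Y) represents [X] - [Y];
(X, Y) ~ (X', Y') iff X + Y' is isomorphic to X' + Y.\<close>
definition burnside_rel :: "('a, 'b) monoid_scheme \<Rightarrow> ('a gset \<times> 'a gset) rel" where
  "burnside_rel L = {((X, Y), (X', Y')). fin_gset L X \<and> fin_gset L Y \<and>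
      fin_gset L X' \<and> fin_gset L Y' \<and> gset_iso L (gset_plus X Y') (gset_plus X' Y)}"

definition burnside_ring :: "('a, 'b) monoid_scheme \<Rightarrow> ('a gset \<times> 'a gset) set set" where
  "burnside_ring L = {(X, Y). fin_gset L X \<and> fin_gset L Y} // burnside_rel L"

definition fixcard :: "'a set \<Rightarrow> 'a gset \<Rightarrow> nat" where
  "fixcard I X = card {x \<in> fst X. \<forall>g\<in>I. snd X g x = x}"

text \<open>phi^I_{L,r} : A(L) -> Z/rZ, X |-> |X^I| mod r (Z/rZ represented by {0..<r}),
computed on a representative of the class.\<close>
definition phi :: "'a set \<Rightarrow> nat \<Rightarrow> ('a gset \<times> 'a gset) set \<Rightarrow> int" where
  "phi I r c = (let (X, Y) = (SOME z. z \<in> c) in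
                 (int (fixcard I X) - int (fixcard I Y)) mod int r)"

definition subconj :: "('a, 'b) monoid_scheme \<Rightarrow> 'a set \<Rightarrow> 'a set \<Rightarrow> bool" where
  "subconj G I K \<longleftrightarrow> (\<exists>g\<in>carrier G. (\<lambda>h. g \<otimes>\<^bsub>G\<^esub> h \<otimes>\<^bsub>G\<^esub> inv\<^bsub>G\<^esub> g) ` I \<subseteq> K)"

definition conjugate :: "('a, 'b) monoid_scheme \<Rightarrow> 'a set \<Rightarrow> 'a set \<Rightarrow> bool" where
  "conjugate G H K \<longleftrightarrow> (\<exists>g\<in>carrier G. (\<lambda>h. g \<otimes>\<^bsub>G\<^esub> h \<otimes>\<^bsub>G\<^esub> inv\<^bsub>G\<^esub> g) ` H = K)"

text \<open>The ideal p_{K,r} of the Burnside Tambara functor: its value at G/L is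
the intersection of the kernels of phi^I_{L,r} over subgroups I of L with I
subconjugate in G to K.\<close>
definition p_ideal :: "('a, 'b) monoid_scheme \<Rightarrow> 'a set \<Rightarrow> nat \<Rightarrow> 'a set
    \<Rightarrow> ('a gset \<times> 'a gset) set set" where
  "p_ideal G K r L = (if subgroup L G then
     {c \<in> burnside_ring (G\<lparr>carrier := L\<rparr>). \<forall>I. subgroup I G \<and> I \<subseteq> L \<and> subconj G I K
        \<longrightarrow> phi I r c = 0}
   else {})"

end

theory Submission imports Defs "HOL-Library.Countable_Set"
begin


definition gclosed :: "'a set \<Rightarrow> 'a gset \<Rightarrow> bool" where
  "gclosed I X \<longleftrightarrow> (\<forall>g\<in>I. \<forall>x\<in>fst X. snd X g x \<in> fst X)"

lemma fin_gset_closed: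
  assumes "fin_gset L X" shows "gclosed (carrier L) X"
proof -
  interpret group_action L "fst X" "snd X" using assms fin_gset_def by blast
  show ?thesis unfolding gclosed_def using bij_prop0 Bij_imp_funcset by blast
qed

lemma gclosed_plus:
  assumes "gclosed I X" "gclosed I Y" shows "gclosed I (gset_plus X Y)"
  using assms unfolding gclosed_def gset_plus_def by auto

lemma plus_even: "n \<in> fst X \<Longrightarrow> snd (gset_plus X Y) g (2*n) = 2 * snd X g n"
  unfolding gset_plus_def by simp
lemma plus_odd: "n \<in> fst Y \<Longrightarrow> snd (gset_plus X Y) g (2*n+1) = 2 * snd Y g n + 1"
  unfolding gset_plus_def by simp

lemma fixcard_plus:
  assumes "finite (fst X)" "finite (fst Y)"
  shows "fixcard I (gset_plus X Y) = fixcard I X + fixcard I Y"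
proof -
  let ?FX = "{x \<in> fst X. \<forall>g\<in>I. snd X g x = x}"
  let ?FY = "{x \<in> fst Y. \<forall>g\<in>I. snd Y g x = x}"
  have eq: "{x \<in> fst (gset_plus X Y). \<forall>g\<in>I. snd (gset_plus X Y) g x = x}
      = (\<lambda>n. 2 * n) ` ?FX \<union> (\<lambda>n. 2 * n + 1) ` ?FY"
  proof (unfold set_eq_iff, intro allI)
    fix x
    have f: "fst (gset_plus X Y) = (\<lambda>n. 2 * n) ` fst X \<union> (\<lambda>n. 2 * n + 1) ` fst Y"
      unfolding gset_plus_def by simp
    show "x \<in> {x \<in> fst (gset_plus X Y). \<forall>g\<in>I. snd (gset_plus X Y) g x = x} \<longleftrightarrow>
          x \<in> (\<lambda>n. 2 * n) ` ?FX \<union> (\<lambda>n. 2 * n + 1) ` ?FY"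
    proof (cases "x \<in> fst (gset_plus X Y)")
      case True
      then consider n where "n \<in> fst X" "x = 2*n" | n where "n \<in> fst Y" "x = 2*n+1"
        using f by auto
      then show ?thesis
      proof cases
        case 1
        then show ?thesis using plus_even[of n X Y] True by auto presburger+
      next
        case 2
        then show ?thesis using plus_odd[of n Y X] True by auto presburger+
      qed
    next
      case False
      then show ?thesis using f by auto
    qed
  qed
  have "card ((\<lambda>n. 2 * n) ` ?FX \<union> (\<lambda>n. 2 * n + 1) ` ?FY)
      = card ((\<lambda>n. 2 * n) ` ?FX) + card ((\<lambda>n. 2 * n + 1) ` ?FY)"
    by (rule card_Un_disjoint) (use assms in auto, presburger)
  also have "\<dots> = card ?FX + card ?FY"
    by (simp add: card_image inj_on_def)
  finally show ?thesis unfolding fixcard_def eq .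
qed

lemma iso_fixcard:
  assumes "gset_iso L X Y" "gclosed I X" "I \<subseteq> carrier L"
  shows "fixcard I X = fixcard I Y"
proof -
  obtain f where f: "bij_betw f (fst X) (fst Y)"
    "\<forall>g\<in>carrier L. \<forall>x\<in>fst X. f (snd X g x) = snd Y g (f x)"
    using assms(1) unfolding gset_iso_def by blast
  have inj: "inj_on f (fst X)" using f(1) by (rule bij_betw_imp_inj_on)
  have im: "f ` fst X = fst Y" using f(1) by (rule bij_betw_imp_surj_on)
  have "{y \<in> fst Y. \<forall>g\<in>I. snd Y g y = y} = f ` {x \<in> fst X. \<forall>g\<in>I. snd X g x = x}"
  proof
    show "f ` {x \<in> fst X. \<forall>g\<in>I. snd X g x = x} \<subseteq> {y \<in> fst Y. \<forall>g\<in>I. snd Y g y = y}"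
      using f(2) im assms(3) by force
  next
    show "{y \<in> fst Y. \<forall>g\<in>I. snd Y g y = y} \<subseteq> f ` {x \<in> fst X. \<forall>g\<in>I. snd X g x = x}"
    proof
      fix y assume y: "y \<in> {y \<in> fst Y. \<forall>g\<in>I. snd Y g y = y}"
      then obtain x where x: "x \<in> fst X" "y = f x" using im by auto
      have "\<forall>g\<in>I. snd X g x = x"
      proof
        fix g assume g: "g \<in> I"
        have "f (snd X g x) = snd Y g (f x)" using f(2) g assms(3) x by blast
        also have "\<dots> = f x" using y x g by simp
        finally have "f (snd X g x) = f x" .
        moreover have "snd X g x \<in> fst X" using assms(2) g x unfolding gclosed_def by auto
        ultimately show "snd X g x = x" using inj x by (meson inj_onD)
      qed
      then show "y \<in> f ` {x \<in> fst X. \<forall>g\<in>I. snd X g x = x}" using x by auto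
    qed
  qed
  moreover have "inj_on f {x \<in> fst X. \<forall>g\<in>I. snd X g x = x}"
    by (rule inj_on_subset[OF inj]) auto
  ultimately show ?thesis unfolding fixcard_def by (simp add: card_image)
qed

lemma iso_refl: "gset_iso L X X"
  unfolding gset_iso_def by (rule exI[of _ id]) auto

lemma phi_class:
  assumes "fin_gset L X0" "fin_gset L Y0" "I \<subseteq> carrier L"
  shows "phi I r (burnside_rel L `` {(X0, Y0)}) =
           (int (fixcard I X0) - int (fixcard I Y0)) mod int r"
proof -
  let ?c = "burnside_rel L `` {(X0, Y0)}"
  have "(X0, Y0) \<in> ?c" using assms by (simp add: burnside_rel_def iso_refl)
  hence "(SOME z. z \<in> ?c) \<in> ?c" by (rule someI)
  then obtain X Y where XY: "(SOME z. z \<in> ?c) = (X, Y)" "(X, Y) \<in> ?c"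
    by (cases "SOME z. z \<in> ?c") auto
  hence r: "fin_gset L X" "fin_gset L Y" "gset_iso L (gset_plus X0 Y) (gset_plus X Y0)"
    unfolding burnside_rel_def by auto
  have fin: "finite (fst X0)" "finite (fst Y0)" "finite (fst X)" "finite (fst Y)"
    using assms r unfolding fin_gset_def by auto
  have cl: "gclosed I (gset_plus X0 Y)"
    using gclosed_plus[OF fin_gset_closed[OF assms(1)] fin_gset_closed[OF r(2)]] assms(3) unfolding gclosed_def by blast
  have e: "fixcard I (gset_plus X0 Y) = fixcard I (gset_plus X Y0)"
    using iso_fixcard[OF r(3) cl assms(3)] .
  hence "fixcard I X0 + fixcard I Y = fixcard I X + fixcard I Y0"
    using e fixcard_plus[OF fin(1,4)] fixcard_plus[OF fin(3,2)] by simp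
  hence "int (fixcard I X) - int (fixcard I Y) = int (fixcard I X0) - int (fixcard I Y0)"
    by linarith
  thus ?thesis unfolding phi_def XY(1) by simp
qed



lemma (in group_action) orbit_sub: "x \<in> E \<Longrightarrow> orbit G \<phi> x \<subseteq> E"
  unfolding orbit_def using element_image by blast

lemma (in group_action) pgroup_fix:
  assumes finE: "finite E" and p: "prime p" and cardG: "card (carrier G) = p ^ k"
  shows "card {x \<in> E. \<forall>g\<in>carrier G. \<phi> g x = x} mod p = card E mod p"
proof -
  let ?F = "{x \<in> E. \<forall>g\<in>carrier G. \<phi> g x = x}"
  have grp: "group G" using group_hom group_hom.axioms(1) by blast
  have orbF: "orbit G \<phi> x = {x}" if "x \<in> ?F" for x
    using that monoid.one_closed[OF group.is_monoid[OF grp]] unfolding orbit_def by force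
  have Forb: "x \<in> ?F" if "x \<in> E" "orbit G \<phi> x = {x}" for x
  proof -
    have "\<phi> g x = x" if "g \<in> carrier G" for g
    proof -
      have "\<phi> g x \<in> orbit G \<phi> x" unfolding orbit_def using that by blast
      thus ?thesis using \<open>orbit G \<phi> x = {x}\<close> by simp
    qed
    thus ?thesis using \<open>x \<in> E\<close> by blast
  qed
  have dvd_inner: "p dvd (\<Sum>x\<in>orb. if x \<in> ?F then 0 else 1::nat)" if orbin: "orb \<in> orbits G E \<phi>" for orb
  proof -
    obtain y where y: "y \<in> E" "orb = orbit G \<phi> y" using orbin unfolding orbits_def by blast
    show ?thesis
    proof (cases "y \<in> ?F")
      case True
      then show ?thesis using orbF y by simp
    next
      case False
      have nf: "x \<notin> ?F" if "x \<in> orb" for x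
      proof
        assume xF: "x \<in> ?F"
        have "x \<in> E" using that y orbit_sub by blast
        hence "y \<in> orbit G \<phi> x" using orbit_sym y that by blast
        hence "y = x" using orbF[OF xF] by simp
        thus False using False xF by simp
      qed
      hence "(\<Sum>x\<in>orb. if x \<in> ?F then 0 else 1::nat) = (\<Sum>x\<in>orb. 1)"
        by (intro sum.cong) auto
      hence "(\<Sum>x\<in>orb. if x \<in> ?F then 0 else 1::nat) = card orb" by simp
      moreover have "card orb \<noteq> 1"
      proof
        assume "card orb = 1"
        then obtain z where "orb = {z}" using card_1_singletonE by blast
        moreover have "y \<in> orb" using y orbit_refl by blast
        ultimately have "orbit G \<phi> y = {y}" using y by simp
        thus False using Forb y False by blast
      qed
      moreover have "card orb dvd p ^ k"
        using orbit_stabilizer_theorem[OF y(1)] y cardG unfolding order_def by (metis dvd_triv_left)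
      ultimately show ?thesis
        using p by (metis divides_primepow_nat dvd_refl dvd_power power_0 not_gr0 )
    qed
  qed
  have "card (E - ?F) = (\<Sum>x\<in>E. if x \<in> ?F then 0 else 1::nat)"
    using finE by (simp add: sum.If_cases Diff_eq, intro arg_cong[where f=card]) auto
  also have "\<dots> = (\<Sum>orb\<in>orbits G E \<phi>. \<Sum>x\<in>orb. if x \<in> ?F then 0 else 1::nat)"
    using disjoint_sum[OF finE, of "\<lambda>x. if x \<in> ?F then 0 else 1::nat"] by (rule sym)
  finally have "p dvd card (E - ?F)" using dvd_inner by (simp add: dvd_sum)
  moreover have "card E = card ?F + card (E - ?F)"
    using finE by (metis (no_types, lifting) card_Diff_subset card_mono diff_add_inverse2 le_add_diff_inverse mem_Collect_eq subsetI finite_subset)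
  ultimately show ?thesis by (auto elim!: dvdE)
qed



definition gset_of :: "'c set \<Rightarrow> ('a \<Rightarrow> 'c \<Rightarrow> 'c) \<Rightarrow> 'a gset" where
  "gset_of F act = (to_nat_on F ` F,
     \<lambda>g. \<lambda>n \<in> to_nat_on F ` F. to_nat_on F (act g (from_nat_into F n)))"

lemma gset_of_enc:
  assumes "finite F" "f \<in> F"
  shows "snd (gset_of F act) g (to_nat_on F f) = to_nat_on F (act g f)"
  using assms by (simp add: gset_of_def countable_finite)

lemma gset_of_fixcard:
  assumes fin: "finite F" and cl: "\<And>g f. g \<in> I \<Longrightarrow> f \<in> F \<Longrightarrow> act g f \<in> F"
  shows "fixcard I (gset_of F act) = card {f \<in> F. \<forall>g\<in>I. act g f = f}"
proof -
  have cF: "countable F" using fin by (rule countable_finite)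
  have inj: "inj_on (to_nat_on F) F" using cF by (rule inj_on_to_nat_on)
  have "{n \<in> fst (gset_of F act). \<forall>g\<in>I. snd (gset_of F act) g n = n}
       = to_nat_on F ` {f \<in> F. \<forall>g\<in>I. act g f = f}"
  proof (unfold set_eq_iff, intro allI iffI)
    fix n assume n: "n \<in> {n \<in> fst (gset_of F act). \<forall>g\<in>I. snd (gset_of F act) g n = n}"
    then obtain f where f: "f \<in> F" "n = to_nat_on F f" by (auto simp: gset_of_def)
    have "act g f = f" if g: "g \<in> I" for g
    proof -
      have "to_nat_on F (act g f) = to_nat_on F f"
        using n f g gset_of_enc[OF fin f(1), of act g] by auto
      thus ?thesis using inj cl[OF g f(1)] f(1) by (meson inj_onD)
    qed
    thus "n \<in> to_nat_on F ` {f \<in> F. \<forall>g\<in>I. act g f = f}" using f by auto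
  next
    fix n assume "n \<in> to_nat_on F ` {f \<in> F. \<forall>g\<in>I. act g f = f}"
    then obtain f where f: "f \<in> F" "n = to_nat_on F f" "\<forall>g\<in>I. act g f = f" by auto
    thus "n \<in> {n \<in> fst (gset_of F act). \<forall>g\<in>I. snd (gset_of F act) g n = n}"
      using gset_of_enc[OF fin f(1), of act] by (auto simp: gset_of_def)
  qed
  moreover have "inj_on (to_nat_on F) {f \<in> F. \<forall>g\<in>I. act g f = f}"
    by (rule inj_on_subset[OF inj]) auto
  ultimately show ?thesis unfolding fixcard_def by (simp add: card_image)
qed

lemma gset_of_fin:
  assumes grp: "group L" and fin: "finite F"
   and cl: "\<And>g f. g \<in> carrier L \<Longrightarrow> f \<in> F \<Longrightarrow> act g f \<in> F"
   and comp: "\<And>g h f. g \<in> carrier L \<Longrightarrow> h \<in> carrier L \<Longrightarrow> f \<in> F \<Longrightarrow>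
                 act (g \<otimes>\<^bsub>L\<^esub> h) f = act g (act h f)"
   and one: "\<And>f. f \<in> F \<Longrightarrow> act \<one>\<^bsub>L\<^esub> f = f"
  shows "fin_gset L (gset_of F act)"
proof -
  let ?N = "to_nat_on F ` F"
  let ?e = "to_nat_on F"
  let ?psi = "snd (gset_of F act)"
  have N: "fst (gset_of F act) = ?N" by (simp add: gset_of_def)
  have cF: "countable F" using fin by (rule countable_finite)
  have ext: "?psi g \<in> extensional ?N" for g by (simp add: gset_of_def)
  have enc: "?psi g (?e f) = ?e (act g f)" if "f \<in> F" for g f using gset_of_enc[OF fin that] .
  have inv: "?psi (inv\<^bsub>L\<^esub> g) (?psi g n) = n" if g: "g \<in> carrier L" and n: "n \<in> ?N" for g n
  proof -
    obtain f where f: "f \<in> F" "n = ?e f" using n by auto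
    have "?psi (inv\<^bsub>L\<^esub> g) (?psi g n) = ?e (act (inv\<^bsub>L\<^esub> g) (act g f))"
      using f enc cl g by simp
    also have "\<dots> = ?e (act (inv\<^bsub>L\<^esub> g \<otimes>\<^bsub>L\<^esub> g) f)"
      using comp g f group.inv_closed[OF grp] by simp
    also have "\<dots> = n" using one f g group.l_inv[OF grp] by simp
    finally show ?thesis .
  qed
  have into: "?psi g n \<in> ?N" if g: "g \<in> carrier L" and n: "n \<in> ?N" for g n
  proof -
    obtain f where f: "f \<in> F" "n = ?e f" using n by auto
    thus ?thesis using enc cl g by simp
  qed
  have bij: "?psi g \<in> Bij ?N" if g: "g \<in> carrier L" for g
  proof -
    have gi: "inv\<^bsub>L\<^esub> g \<in> carrier L" using g group.inv_closed[OF grp] by simp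
    have "inv\<^bsub>L\<^esub> (inv\<^bsub>L\<^esub> g) = g" using g group.inv_inv[OF grp] by simp
    hence inv2: "?psi g (?psi (inv\<^bsub>L\<^esub> g) n) = n" if "n \<in> ?N" for n
      using inv[OF gi that] by simp
    have "bij_betw (?psi g) ?N ?N"
    proof (rule bij_betw_byWitness[where f'="?psi (inv\<^bsub>L\<^esub> g)"])
      show "\<forall>a\<in>?N. ?psi (inv\<^bsub>L\<^esub> g) (?psi g a) = a" using inv[OF g] by blast
      show "\<forall>a\<in>?N. ?psi g (?psi (inv\<^bsub>L\<^esub> g) a) = a" using inv2 by blast
      show "?psi g ` ?N \<subseteq> ?N" using into[OF g] by blast
      show "?psi (inv\<^bsub>L\<^esub> g) ` ?N \<subseteq> ?N" using into[OF gi] by blast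
    qed
    thus ?thesis unfolding Bij_def using ext by simp
  qed
  have hom: "?psi \<in> hom L (BijGroup ?N)"
  proof (rule homI)
    fix g assume "g \<in> carrier L" thus "?psi g \<in> carrier (BijGroup ?N)"
      using bij by (simp add: BijGroup_def)
  next
    fix g h assume g: "g \<in> carrier L" and h: "h \<in> carrier L"
    have "?psi (g \<otimes>\<^bsub>L\<^esub> h) = compose ?N (?psi g) (?psi h)"
    proof
      fix n show "?psi (g \<otimes>\<^bsub>L\<^esub> h) n = compose ?N (?psi g) (?psi h) n"
      proof (cases "n \<in> ?N")
        case True
        then obtain f where f: "f \<in> F" "n = ?e f" by auto
        have "?psi (g \<otimes>\<^bsub>L\<^esub> h) n = ?e (act (g \<otimes>\<^bsub>L\<^esub> h) f)" using enc[OF f(1)] f(2) by simp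
        also have "\<dots> = ?e (act g (act h f))" using comp[OF g h f(1)] by simp
        also have "\<dots> = ?psi g (?e (act h f))" using enc[OF cl[OF h f(1)]] by simp
        also have "\<dots> = ?psi g (?psi h n)" using enc[OF f(1)] f(2) by simp
        also have "\<dots> = compose ?N (?psi g) (?psi h) n" using True by (simp add: compose_def)
        finally show ?thesis .
      next
        case False
        thus ?thesis by (simp add: compose_def gset_of_def)
      qed
    qed
    thus "?psi (g \<otimes>\<^bsub>L\<^esub> h) = ?psi g \<otimes>\<^bsub>BijGroup ?N\<^esub> ?psi h"
      using bij[OF g] bij[OF h] by (simp add: BijGroup_def)
  qed
  have "group_action L ?N ?psi"
    unfolding group_action_def group_hom_def group_hom_axioms_def
    using grp group_BijGroup[of ?N] hom by simp
  moreover have "finite ?N" using fin by simp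
  ultimately show ?thesis unfolding fin_gset_def N by simp
qed



definition Fq :: "('a, 'b) monoid_scheme \<Rightarrow> nat \<Rightarrow> ('a \<Rightarrow> nat) set" where
  "Fq G q = {f \<in> carrier G \<rightarrow>\<^sub>E {0..<q}. (\<Sum>x\<in>carrier G. f x) mod q = 0}"

definition ract :: "('a, 'b) monoid_scheme \<Rightarrow> nat \<Rightarrow> 'a \<Rightarrow> ('a \<Rightarrow> nat) \<Rightarrow> ('a \<Rightarrow> nat)" where
  "ract G q g = (\<lambda>f \<in> Fq G q. \<lambda>x \<in> carrier G. f (x \<otimes>\<^bsub>G\<^esub> g))"

definition FixS :: "('a, 'b) monoid_scheme \<Rightarrow> nat \<Rightarrow> 'a set \<Rightarrow> ('a \<Rightarrow> nat) set" where
  "FixS G q I = {f \<in> Fq G q. \<forall>g\<in>I. ract G q g f = f}"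

context group
begin

lemma rbij: "g \<in> carrier G \<Longrightarrow> bij_betw (\<lambda>x. x \<otimes> g) (carrier G) (carrier G)"
proof (rule bij_betw_byWitness[where f'="\<lambda>x. x \<otimes> inv g"])
  assume g: "g \<in> carrier G"
  show "\<forall>a\<in>carrier G. a \<otimes> g \<otimes> inv g = a" using g by (simp add: m_assoc)
  show "\<forall>a\<in>carrier G. a \<otimes> inv g \<otimes> g = a" using g by (simp add: m_assoc)
  show "(\<lambda>x. x \<otimes> g) ` carrier G \<subseteq> carrier G" using g by auto
  show "(\<lambda>x. x \<otimes> inv g) ` carrier G \<subseteq> carrier G" using g by auto
qed

lemma ract_app: "f \<in> Fq G q \<Longrightarrow> x \<in> carrier G \<Longrightarrow> ract G q g f x = f (x \<otimes> g)"
  by (simp add: ract_def)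

lemma ract_closed:
  assumes g: "g \<in> carrier G" and f: "f \<in> Fq G q"
  shows "ract G q g f \<in> Fq G q"
proof -
  have fP: "f \<in> carrier G \<rightarrow>\<^sub>E {0..<q}" and fs: "(\<Sum>x\<in>carrier G. f x) mod q = 0"
    using f by (auto simp: Fq_def)
  have "ract G q g f = (\<lambda>x \<in> carrier G. f (x \<otimes> g))" using f by (simp add: ract_def)
  moreover have "(\<lambda>x \<in> carrier G. f (x \<otimes> g)) \<in> carrier G \<rightarrow>\<^sub>E {0..<q}"
    using fP g by auto
  moreover have "(\<Sum>x\<in>carrier G. (\<lambda>x \<in> carrier G. f (x \<otimes> g)) x) = (\<Sum>x\<in>carrier G. f x)"
  proof -
    have "(\<Sum>x\<in>carrier G. (\<lambda>x \<in> carrier G. f (x \<otimes> g)) x) = (\<Sum>x\<in>carrier G. f (x \<otimes> g))"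
      by (rule sum.cong) auto
    also have "\<dots> = (\<Sum>x\<in>carrier G. f x)"
      by (rule sum.reindex_bij_betw[OF rbij[OF g]])
    finally show ?thesis .
  qed
  ultimately show ?thesis using fs by (simp add: Fq_def)
qed

lemma ract_comp:
  assumes g: "g \<in> carrier G" and h: "h \<in> carrier G" and f: "f \<in> Fq G q"
  shows "ract G q (g \<otimes> h) f = ract G q g (ract G q h f)"
proof -
  have rh: "ract G q h f \<in> Fq G q" using ract_closed[OF h f] .
  show ?thesis
  proof
    fix x show "ract G q (g \<otimes> h) f x = ract G q g (ract G q h f) x"
      using f rh g h by (cases "x \<in> carrier G") (simp_all add: ract_def m_assoc)
  qed
qed

lemma ract_one:
  assumes f: "f \<in> Fq G q" shows "ract G q \<one> f = f"
proof
  fix x show "ract G q \<one> f x = f x"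
    using f by (cases "x \<in> carrier G") (auto simp: ract_def Fq_def PiE_def extensional_def)
qed

lemma Fq_fin: "finite (carrier G) \<Longrightarrow> finite (Fq G q)"
  unfolding Fq_def by (rule finite_subset[of _ "carrier G \<rightarrow>\<^sub>E {0..<q}"]) (auto intro: finite_PiE)

lemma fix_all:
  assumes fin: "finite (carrier G)" and q: "prime q" and nd: "\<not> q dvd card (carrier G)"
  shows "card (FixS G q (carrier G)) = 1"
proof -
  let ?z = "\<lambda>x \<in> carrier G. (0::nat)"
  have qpos: "q > 0" using q prime_gt_0_nat by blast
  have zF: "?z \<in> Fq G q" using qpos by (auto simp: Fq_def)
  have zfix: "?z \<in> FixS G q (carrier G)"
  proof -
    have "ract G q g ?z = ?z" if g: "g \<in> carrier G" for g
    proof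
      fix x show "ract G q g ?z x = ?z x" using zF g by (cases "x \<in> carrier G") (simp_all add: ract_def)
    qed
    thus ?thesis using zF by (simp add: FixS_def)
  qed
  have "f = ?z" if fF: "f \<in> FixS G q (carrier G)" for f
  proof -
    have f: "f \<in> Fq G q" and fx: "\<And>g. g \<in> carrier G \<Longrightarrow> ract G q g f = f"
      using fF by (auto simp: FixS_def)
    have fP: "f \<in> carrier G \<rightarrow>\<^sub>E {0..<q}" and fs: "(\<Sum>x\<in>carrier G. f x) mod q = 0"
      using f by (auto simp: Fq_def)
    have const: "f x = f \<one>" if x: "x \<in> carrier G" for x
    proof -
      have "ract G q x f \<one> = f (\<one> \<otimes> x)" using ract_app[OF f] by simp
      hence "f \<one> = f x" using fx[OF x] x by simp
      thus ?thesis by simp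
    qed
    have "(\<Sum>x\<in>carrier G. f x) = (\<Sum>x\<in>carrier G. f \<one>)" by (rule sum.cong[OF refl]) (rule const)
    hence "(\<Sum>x\<in>carrier G. f x) = card (carrier G) * f \<one>" by simp
    hence "q dvd card (carrier G) * f \<one>" using fs by (simp add: mod_eq_0_iff_dvd)
    hence "q dvd f \<one>" using q nd by (simp add: prime_dvd_mult_iff)
    moreover have "f \<one> < q" using fP by auto
    ultimately have "f \<one> = 0" by (metis dvd_imp_le not_less neq0_conv)
    show "f = ?z"
    proof
      fix x show "f x = ?z x"
      proof (cases "x \<in> carrier G")
        case True
        then show ?thesis using const[OF True] \<open>f \<one> = 0\<close> by simp
      next
        case False
        then show ?thesis using fP by (simp add: PiE_def extensional_def)
      qed
    qed
  qed
  hence "FixS G q (carrier G) = {?z}" using zfix by blast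
  thus ?thesis by simp
qed

lemma fix_sub:
  assumes fin: "finite (carrier G)" and q: "q > 0" and I: "subgroup I G"
    and ne: "I \<noteq> carrier G"
  shows "q dvd card (FixS G q I)"
proof -
  have Isub: "I \<subseteq> carrier G" using I subgroup.subset by blast
  obtain a where a: "a \<in> carrier G" "a \<notin> I" using Isub ne by blast
  define A where "A = a <# I"
  have A_eq: "A = (\<lambda>h. a \<otimes> h) ` I" unfolding A_def l_coset_def by auto
  have Asub: "A \<subseteq> carrier G" using A_eq a Isub by auto
  have cardA: "card A = card I"
  proof -
    have "inj_on (\<lambda>h. a \<otimes> h) I"
    proof (rule inj_onI)
      fix x y assume "x \<in> I" "y \<in> I" "a \<otimes> x = a \<otimes> y"
      thus "x = y" using a Isub by (simp add: subsetD)
    qed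
    thus ?thesis unfolding A_eq by (rule card_image)
  qed
  have disj: "I \<inter> A = {}"
  proof (rule ccontr)
    assume "I \<inter> A \<noteq> {}"
    then obtain h where h: "h \<in> I" "a \<otimes> h \<in> I" using A_eq by auto
    have "a = (a \<otimes> h) \<otimes> inv h" using h a Isub by (simp add: m_assoc subsetD)
    also have "\<dots> \<in> I" using h I by (simp add: subgroup.m_closed subgroup.m_inv_closed)
    finally show False using a by simp
  qed
  define d where "d x = (if x \<in> I then 1 else if x \<in> A then q - 1 else (0::nat))" for x
  define sh where "sh t f = (\<lambda>x \<in> carrier G. (f x + t * d x) mod q)" for t f
  have memI: "x \<otimes> g \<in> I \<longleftrightarrow> x \<in> I" if x: "x \<in> carrier G" and g: "g \<in> I" for x g
  proof
    assume "x \<otimes> g \<in> I"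
    hence "(x \<otimes> g) \<otimes> inv g \<in> I" using g I by (simp add: subgroup.m_closed subgroup.m_inv_closed)
    thus "x \<in> I" using x g Isub by (simp add: m_assoc subsetD)
  next
    assume "x \<in> I" thus "x \<otimes> g \<in> I" using g I by (simp add: subgroup.m_closed)
  qed
  have memA: "x \<otimes> g \<in> A \<longleftrightarrow> x \<in> A" if x: "x \<in> carrier G" and g: "g \<in> I" for x g
  proof
    assume "x \<otimes> g \<in> A"
    then obtain h where h: "h \<in> I" "x \<otimes> g = a \<otimes> h" using A_eq by auto
    have gc: "g \<in> carrier G" using g Isub by blast
    have hc: "h \<in> carrier G" using h Isub by blast
    have "x = (x \<otimes> g) \<otimes> inv g" using x gc by (simp add: m_assoc)
    also have "\<dots> = a \<otimes> (h \<otimes> inv g)" using h(2) a hc gc by (simp add: m_assoc)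
    finally have "x = a \<otimes> (h \<otimes> inv g)" .
    moreover have "h \<otimes> inv g \<in> I" using h g I by (simp add: subgroup.m_closed subgroup.m_inv_closed)
    ultimately show "x \<in> A" using A_eq by blast
  next
    assume "x \<in> A"
    then obtain h where h: "h \<in> I" "x = a \<otimes> h" using A_eq by auto
    have "x \<otimes> g = a \<otimes> (h \<otimes> g)" using h a g Isub by (simp add: m_assoc subsetD)
    moreover have "h \<otimes> g \<in> I" using h g I by (simp add: subgroup.m_closed)
    ultimately show "x \<otimes> g \<in> A" using A_eq by blast
  qed
  have d_inv: "d (x \<otimes> g) = d x" if "x \<in> carrier G" "g \<in> I" for x g
    unfolding d_def using memI[OF that] memA[OF that] by simp
  have sum_d: "(\<Sum>x\<in>carrier G. d x) = q * card I"
  proof -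
    have fI: "finite I" using fin Isub by (rule finite_subset[rotated])
    have fA: "finite A" using fin Asub by (rule finite_subset[rotated])
    have "(\<Sum>x\<in>carrier G. d x) = (\<Sum>x\<in>I \<union> A. d x)"
      by (rule sum.mono_neutral_right) (use fin Isub Asub in \<open>auto simp: d_def\<close>)
    also have "\<dots> = (\<Sum>x\<in>I. d x) + (\<Sum>x\<in>A. d x)"
      by (rule sum.union_disjoint) (use fI fA disj in auto)
    also have "(\<Sum>x\<in>I. d x) = (\<Sum>x\<in>I. 1)" by (rule sum.cong) (auto simp: d_def)
    also have "(\<Sum>x\<in>A. d x) = (\<Sum>x\<in>A. q - 1)" by (rule sum.cong) (use disj in \<open>auto simp: d_def\<close>)
    finally show ?thesis using cardA q by (simp add: algebra_simps)
  qed
  have sh_app: "sh t f x = (f x + t * d x) mod q" if "x \<in> carrier G" for t f x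
    using that by (simp add: sh_def)
  have sh_Fq: "sh t f \<in> Fq G q" if f: "f \<in> Fq G q" for t f
  proof -
    have fs: "(\<Sum>x\<in>carrier G. f x) mod q = 0" using f by (simp add: Fq_def)
    have "(\<Sum>x\<in>carrier G. sh t f x) mod q = (\<Sum>x\<in>carrier G. (f x + t * d x) mod q) mod q"
      by (simp add: sh_app)
    also have "\<dots> = (\<Sum>x\<in>carrier G. f x + t * d x) mod q" by (rule mod_sum_eq)
    also have "\<dots> = ((\<Sum>x\<in>carrier G. f x) + t * (q * card I)) mod q"
      by (simp add: sum.distrib sum_distrib_left[symmetric] sum_d)
    also have "\<dots> = 0" using fs by (simp add: mod_add_left_eq[symmetric])
    finally show ?thesis using q by (auto simp: Fq_def sh_def)
  qed
  have sh_Fix: "sh t f \<in> FixS G q I" if f: "f \<in> FixS G q I" for t f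
  proof -
    have fF: "f \<in> Fq G q" and fx: "\<And>g. g \<in> I \<Longrightarrow> ract G q g f = f" using f by (auto simp: FixS_def)
    have "ract G q g (sh t f) = sh t f" if g: "g \<in> I" for g
    proof
      fix x show "ract G q g (sh t f) x = sh t f x"
      proof (cases "x \<in> carrier G")
        case True
        have gc: "g \<in> carrier G" using g Isub by blast
        have xg: "x \<otimes> g \<in> carrier G" using True gc by simp
        have "f (x \<otimes> g) = f x" using ract_app[OF fF True, of g] fx[OF g] by simp
        thus ?thesis using ract_app[OF sh_Fq[OF fF] True, of g t] sh_app[OF xg] sh_app[OF True] d_inv[OF True g] by simp
      next
        case False
        thus ?thesis using sh_Fq[OF fF] by (simp add: ract_def sh_def)
      qed
    qed
    thus ?thesis using sh_Fq[OF fF] by (simp add: FixS_def)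
  qed
  have sh_sh: "sh t (sh s f) = f" if f: "f \<in> Fq G q" and st: "(s + t) mod q = 0" for s t f
  proof
    fix x show "sh t (sh s f) x = f x"
    proof (cases "x \<in> carrier G")
      case True
      have fx: "f x < q" using f True by (auto simp: Fq_def)
      obtain m where m: "s + t = q * m" using st by (metis mod_eq_0_iff_dvd dvdE)
      have "sh t (sh s f) x = ((f x + s * d x) mod q + t * d x) mod q" using True by (simp add: sh_app)
      also have "\<dots> = (f x + s * d x + t * d x) mod q" by (rule mod_add_left_eq)
      also have "\<dots> = (f x + (s + t) * d x) mod q" by (simp add: algebra_simps)
      also have "\<dots> = f x" using fx m by (simp add: mult.assoc)
      finally show ?thesis .
    next
      case False
      thus ?thesis using f by (simp add: sh_def Fq_def PiE_def extensional_def)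
    qed
  qed
  have one_I: "\<one> \<in> I" using I subgroup.one_closed by blast
  have d1: "d \<one> = 1" using one_I by (simp add: d_def)
  have sh1: "sh t f \<one> = (f \<one> + t) mod q" for t f using d1 by (simp add: sh_app)
  define F0 where "F0 = {f \<in> FixS G q I. f \<one> = 0}"
  have "bij_betw (\<lambda>(t, f). sh t f) ({0..<q} \<times> F0) (FixS G q I)"
  proof (rule bij_betw_byWitness[where f'="\<lambda>f. (f \<one>, sh (q - f \<one>) f)"])
    show "\<forall>a\<in>{0..<q} \<times> F0. (\<lambda>f. (f \<one>, sh (q - f \<one>) f)) ((\<lambda>(t, f). sh t f) a) = a"
    proof
      fix a assume "a \<in> {0..<q} \<times> F0"
      then obtain t f where a: "a = (t, f)" "t < q" "f \<in> F0" by auto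
      have fF: "f \<in> Fq G q" and f1: "f \<one> = 0" using a(3) by (auto simp: F0_def FixS_def)
      have "sh t f \<one> = t" using sh1 f1 a(2) by simp
      moreover have "sh (q - t) (sh t f) = f" using sh_sh[OF fF] a(2) by simp
      ultimately show "(\<lambda>f. (f \<one>, sh (q - f \<one>) f)) ((\<lambda>(t, f). sh t f) a) = a" using a(1) by simp
    qed
    show "\<forall>a'\<in>FixS G q I. (\<lambda>(t, f). sh t f) ((\<lambda>f. (f \<one>, sh (q - f \<one>) f)) a') = a'"
    proof
      fix f assume f: "f \<in> FixS G q I"
      have fF: "f \<in> Fq G q" using f by (simp add: FixS_def)
      have "f \<one> < q" using fF one_I Isub by (auto simp: Fq_def)
      hence "sh (f \<one>) (sh (q - f \<one>) f) = f" using sh_sh[OF fF] by simp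
      thus "(\<lambda>(t, f). sh t f) ((\<lambda>f. (f \<one>, sh (q - f \<one>) f)) f) = f" by simp
    qed
    show "(\<lambda>(t, f). sh t f) ` ({0..<q} \<times> F0) \<subseteq> FixS G q I"
      using sh_Fix by (auto simp: F0_def)
    show "(\<lambda>f. (f \<one>, sh (q - f \<one>) f)) ` FixS G q I \<subseteq> {0..<q} \<times> F0"
    proof
      fix y assume "y \<in> (\<lambda>f. (f \<one>, sh (q - f \<one>) f)) ` FixS G q I"
      then obtain f where f: "f \<in> FixS G q I" "y = (f \<one>, sh (q - f \<one>) f)" by auto
      have fF: "f \<in> Fq G q" using f by (simp add: FixS_def)
      have lt: "f \<one> < q" using fF one_I Isub by (auto simp: Fq_def)
      have "sh (q - f \<one>) f \<one> = 0" using sh1 lt by simp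
      thus "y \<in> {0..<q} \<times> F0" using f lt sh_Fix[OF f(1)] by (simp add: F0_def)
    qed
  qed
  hence "card (FixS G q I) = card ({0..<q} \<times> F0)" by (simp add: bij_betw_same_card)
  also have "\<dots> = q * card F0" by (simp add: card_cartesian_product)
  finally show ?thesis by simp
qed

end


lemma int_mod_cong:
  fixes a b a' b' p :: nat
  assumes "a mod p = a' mod p" "b mod p = b' mod p"
  shows "(int a - int b) mod int p = (int a' - int b') mod int p"
proof -
  have "int a mod int p = int a' mod int p" using assms(1) by (metis of_nat_mod)
  moreover have "int b mod int p = int b' mod int p" using assms(2) by (metis of_nat_mod)
  ultimately show ?thesis by (rule mod_diff_cong)
qed

context group
begin

lemma conj_mult:
  assumes "a \<in> carrier G" "b \<in> carrier G" "h \<in> carrier G"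
  shows "(b \<otimes> a) \<otimes> h \<otimes> inv (b \<otimes> a) = b \<otimes> (a \<otimes> h \<otimes> inv a) \<otimes> inv b"
  using assms by (simp add: inv_mult_group m_assoc)

lemma subconj_trans:
  assumes I: "I \<subseteq> carrier G" and H: "H \<subseteq> carrier G"
    and "subconj G I H" "subconj G H K"
  shows "subconj G I K"
proof -
  obtain a where a: "a \<in> carrier G" "(\<lambda>h. a \<otimes> h \<otimes> inv a) ` I \<subseteq> H"
    using assms(3) unfolding subconj_def by blast
  obtain b where b: "b \<in> carrier G" "(\<lambda>h. b \<otimes> h \<otimes> inv b) ` H \<subseteq> K"
    using assms(4) unfolding subconj_def by blast
  have "(\<lambda>h. (b \<otimes> a) \<otimes> h \<otimes> inv (b \<otimes> a)) ` I \<subseteq> K"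
  proof
    fix y assume "y \<in> (\<lambda>h. (b \<otimes> a) \<otimes> h \<otimes> inv (b \<otimes> a)) ` I"
    then obtain h where h: "h \<in> I" "y = (b \<otimes> a) \<otimes> h \<otimes> inv (b \<otimes> a)" by blast
    have hc: "h \<in> carrier G" using h I by blast
    have "a \<otimes> h \<otimes> inv a \<in> H" using a h by blast
    hence "b \<otimes> (a \<otimes> h \<otimes> inv a) \<otimes> inv b \<in> K" using b by blast
    thus "y \<in> K" using h(2) conj_mult[OF a(1) b(1) hc] by simp
  qed
  moreover have "b \<otimes> a \<in> carrier G" using a b by simp
  ultimately show ?thesis unfolding subconj_def by blast
qed

lemma conjugate_sym:
  assumes H: "H \<subseteq> carrier G" and c: "conjugate G H K"
  shows "conjugate G K H"
proof -
  obtain g where g: "g \<in> carrier G" "(\<lambda>h. g \<otimes> h \<otimes> inv g) ` H = K"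
    using c unfolding conjugate_def by blast
  have "(\<lambda>h. inv g \<otimes> h \<otimes> inv (inv g)) ` K = H"
  proof -
    have "(\<lambda>h. inv g \<otimes> h \<otimes> inv (inv g)) ` K = (\<lambda>h. inv g \<otimes> (g \<otimes> h \<otimes> inv g) \<otimes> inv (inv g)) ` H"
      using g(2) by auto
    also have "\<dots> = (\<lambda>h. h) ` H"
    proof (rule image_cong[OF refl])
      fix h assume "h \<in> H"
      hence hc: "h \<in> carrier G" using H by blast
      show "inv g \<otimes> (g \<otimes> h \<otimes> inv g) \<otimes> inv (inv g) = h"
        using g(1) hc by (simp add: m_assoc[symmetric]) (simp add: m_assoc)
    qed
    finally show ?thesis by simp
  qed
  thus ?thesis unfolding conjugate_def using g(1) by blast
qed

lemma conjugate_subconj: "conjugate G H K \<Longrightarrow> subconj G H K"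
  unfolding conjugate_def subconj_def by blast

lemma subconj_refl: "K \<subseteq> carrier G \<Longrightarrow> subconj G K K"
  unfolding subconj_def by (rule bexI[of _ \<one>]) auto

lemma conj_inj: "g \<in> carrier G \<Longrightarrow> inj_on (\<lambda>h. g \<otimes> h \<otimes> inv g) (carrier G)"
  by (rule inj_onI) simp

lemma both_subconj:
  assumes fin: "finite (carrier G)" and H: "subgroup H G" and K: "subgroup K G"
    and KH: "subconj G K H" and HK: "subconj G H K"
  shows "conjugate G H K"
proof -
  have Hc: "H \<subseteq> carrier G" and Kc: "K \<subseteq> carrier G" using H K subgroup.subset by blast+
  have fH: "finite H" using fin Hc by (rule finite_subset[rotated])
  have fK: "finite K" using fin Kc by (rule finite_subset[rotated])
  obtain a where a: "a \<in> carrier G" "(\<lambda>h. a \<otimes> h \<otimes> inv a) ` K \<subseteq> H"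
    using KH unfolding subconj_def by blast
  obtain b where b: "b \<in> carrier G" "(\<lambda>h. b \<otimes> h \<otimes> inv b) ` H \<subseteq> K"
    using HK unfolding subconj_def by blast
  have ca: "card ((\<lambda>h. a \<otimes> h \<otimes> inv a) ` K) = card K"
    by (rule card_image) (rule inj_on_subset[OF conj_inj[OF a(1)] Kc])
  have cb: "card ((\<lambda>h. b \<otimes> h \<otimes> inv b) ` H) = card H"
    by (rule card_image) (rule inj_on_subset[OF conj_inj[OF b(1)] Hc])
  have "card K \<le> card H" using ca a(2) card_mono[OF fH] by metis
  moreover have "card H \<le> card K" using cb b(2) card_mono[OF fK] by metis
  ultimately have "card ((\<lambda>h. b \<otimes> h \<otimes> inv b) ` H) = card K" using cb by simp
  hence "(\<lambda>h. b \<otimes> h \<otimes> inv b) ` H = K" using b(2) fK card_subset_eq by blast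
  thus ?thesis unfolding conjugate_def using b(1) by blast
qed

lemma card_subgroup_pow:
  assumes fin: "finite (carrier G)" and p: "prime p" and n: "card (carrier G) = p ^ n"
    and I: "subgroup I G"
  shows "\<exists>k. card I = p ^ k"
proof -
  have "card I dvd p ^ n" using lagrange[OF I] n unfolding order_def by (metis dvd_triv_right)
  thus ?thesis using p divides_primepow_nat by blast
qed

lemma fix_mod_p:
  assumes fin: "finite (carrier G)" and p: "prime p" and n: "card (carrier G) = p ^ n"
    and L: "subgroup L G" and I: "subgroup I G" and IL: "I \<subseteq> L"
    and X: "fin_gset (G\<lparr>carrier := L\<rparr>) X"
  shows "fixcard I X mod p = card (fst X) mod p"
proof -
  interpret XA: group_action "G\<lparr>carrier := L\<rparr>" "fst X" "snd X" using X fin_gset_def by blast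
  have "subgroup I (G\<lparr>carrier := L\<rparr>)" using subgroup_incl[OF I L IL] .
  hence ga: "group_action (G\<lparr>carrier := I\<rparr>) (fst X) (snd X)"
    using XA.induced_action by simp
  obtain k where k: "card I = p ^ k" using card_subgroup_pow[OF fin p n I] by blast
  have fX: "finite (fst X)" using X fin_gset_def by blast
  have "card {x \<in> fst X. \<forall>g\<in>carrier (G\<lparr>carrier := I\<rparr>). snd X g x = x} mod p = card (fst X) mod p"
    using group_action.pgroup_fix[OF ga fX p, of k] k by simp
  thus ?thesis unfolding fixcard_def by simp
qed

end

lemma phi_indep:
  assumes grp: "group G" and fin: "finite (carrier G)" and p: "prime p" and n: "card (carrier G) = p ^ n"
    and L: "subgroup L G" and c: "c \<in> burnside_ring (G\<lparr>carrier := L\<rparr>)"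
    and I: "subgroup I G" "I \<subseteq> L" and J: "subgroup J G" "J \<subseteq> L"
  shows "phi I p c = phi J p c"
proof -
  obtain X0 Y0 where XY: "fin_gset (G\<lparr>carrier := L\<rparr>) X0" "fin_gset (G\<lparr>carrier := L\<rparr>) Y0"
     "c = burnside_rel (G\<lparr>carrier := L\<rparr>) `` {(X0, Y0)}"
    using c unfolding burnside_ring_def by (auto elim!: quotientE)
  have "phi I p c = (int (fixcard I X0) - int (fixcard I Y0)) mod int p"
    using phi_class[OF XY(1,2)] I XY(3) by simp
  also have "\<dots> = (int (fixcard J X0) - int (fixcard J Y0)) mod int p"
    by (rule int_mod_cong)
       (use group.fix_mod_p[OF grp fin p n L I XY(1)] group.fix_mod_p[OF grp fin p n L J XY(1)]
            group.fix_mod_p[OF grp fin p n L I XY(2)] group.fix_mod_p[OF grp fin p n L J XY(2)] in simp_all)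
  also have "\<dots> = phi J p c"
    using phi_class[OF XY(1,2)] J XY(3) by simp
  finally show ?thesis .
qed

lemma pideal_p:
  assumes grp: "group G" and fin: "finite (carrier G)" and p: "prime p" and n: "card (carrier G) = p ^ n"
    and H: "subgroup H G"
  shows "p_ideal G H p L = (if subgroup L G then
           {c \<in> burnside_ring (G\<lparr>carrier := L\<rparr>). phi {\<one>\<^bsub>G\<^esub>} p c = 0} else {})"
proof (cases "subgroup L G")
  case True
  have one: "subgroup {\<one>\<^bsub>G\<^esub>} G" using group.triv_subgroup[OF grp] .
  have oneL: "{\<one>\<^bsub>G\<^esub>} \<subseteq> L" using True subgroup.one_closed by blast
  have oneH: "subconj G {\<one>\<^bsub>G\<^esub>} H"
    unfolding subconj_def using grp H subgroup.one_closed[OF H]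
    by (intro bexI[of _ "\<one>\<^bsub>G\<^esub>"]) (auto simp: group.is_monoid monoid.one_closed monoid.inv_one)
  let ?A = "burnside_ring (G\<lparr>carrier := L\<rparr>)"
  have "p_ideal G H p L = {c \<in> ?A. \<forall>I. subgroup I G \<and> I \<subseteq> L \<and> subconj G I H \<longrightarrow> phi I p c = 0}"
    using True by (simp add: p_ideal_def)
  also have "\<dots> = {c \<in> ?A. phi {\<one>\<^bsub>G\<^esub>} p c = 0}"
  proof (unfold set_eq_iff, intro allI iffI)
    fix c assume "c \<in> {c \<in> burnside_ring (G\<lparr>carrier := L\<rparr>). \<forall>I. subgroup I G \<and> I \<subseteq> L \<and> subconj G I H \<longrightarrow> phi I p c = 0}"
    thus "c \<in> {c \<in> burnside_ring (G\<lparr>carrier := L\<rparr>). phi {\<one>\<^bsub>G\<^esub>} p c = 0}"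
      using one oneL oneH by blast
  next
    fix c assume c: "c \<in> {c \<in> burnside_ring (G\<lparr>carrier := L\<rparr>). phi {\<one>\<^bsub>G\<^esub>} p c = 0}"
    have "phi I p c = 0" if "subgroup I G" "I \<subseteq> L" for I
      using phi_indep[OF grp fin p n True _ that one oneL] c by simp
    thus "c \<in> {c \<in> burnside_ring (G\<lparr>carrier := L\<rparr>). \<forall>I. subgroup I G \<and> I \<subseteq> L \<and> subconj G I H \<longrightarrow> phi I p c = 0}"
      using c by blast
  qed
  finally show ?thesis using True by simp
next
  case False
  thus ?thesis by (simp add: p_ideal_def)
qed


lemma key:
  assumes grp: "group G" and fin: "finite (carrier G)" and p: "prime p"
    and n: "card (carrier G) = p ^ n" and q: "prime q" "q \<noteq> p"
    and H: "subgroup H G" and K: "subgroup K G" and nKH: "\<not> subconj G K H"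
  shows "p_ideal G H q K \<noteq> p_ideal G K q K"
proof -
  let ?L = "G\<lparr>carrier := K\<rparr>"
  have gL: "group ?L" using group.subgroup_imp_group[OF grp K] .
  have Kc: "K \<subseteq> carrier G" using K subgroup.subset by blast
  have finK: "finite (carrier ?L)" using fin Kc by (simp add: finite_subset)
  let ?F = "Fq ?L q"
  let ?act = "ract ?L q"
  have finF: "finite ?F" using group.Fq_fin[OF gL finK] .
  have qpos: "q > 0" using q(1) prime_gt_0_nat by blast
  define V where "V = gset_of ?F ?act"
  define E0 where "E0 = gset_of ({} :: ('a \<Rightarrow> nat) set) ?act"
  have V: "fin_gset ?L V" unfolding V_def
  proof (rule gset_of_fin[OF gL finF])
    show "\<And>g f. g \<in> carrier ?L \<Longrightarrow> f \<in> ?F \<Longrightarrow> ?act g f \<in> ?F"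
      using group.ract_closed[OF gL] by blast
    show "\<And>g h f. g \<in> carrier ?L \<Longrightarrow> h \<in> carrier ?L \<Longrightarrow> f \<in> ?F \<Longrightarrow>
            ?act (g \<otimes>\<^bsub>?L\<^esub> h) f = ?act g (?act h f)"
      using group.ract_comp[OF gL] by blast
    show "\<And>f. f \<in> ?F \<Longrightarrow> ?act \<one>\<^bsub>?L\<^esub> f = f"
      using group.ract_one[OF gL] by blast
  qed
  have E0: "fin_gset ?L E0" unfolding E0_def by (rule gset_of_fin[OF gL]) auto
  define c where "c = burnside_rel ?L `` {(V, E0)}"
  have cA: "c \<in> burnside_ring ?L" unfolding c_def burnside_ring_def
    by (rule quotientI) (use V E0 in simp)
  have phic: "phi I q c = int (card (FixS ?L q I)) mod int q" if IK: "I \<subseteq> K" for I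
  proof -
    have "phi I q c = (int (fixcard I V) - int (fixcard I E0)) mod int q"
      unfolding c_def by (rule phi_class[OF V E0]) (use IK in simp)
    moreover have "fixcard I V = card (FixS ?L q I)"
      unfolding V_def FixS_def
      by (rule gset_of_fixcard[OF finF]) (use IK group.ract_closed[OF gL] in auto)
    moreover have "fixcard I E0 = 0"
      unfolding E0_def by (subst gset_of_fixcard) auto
    ultimately show ?thesis by simp
  qed
  have "c \<in> p_ideal G H q K"
  proof -
    have "phi I q c = 0" if I: "subgroup I G" "I \<subseteq> K" "subconj G I H" for I
    proof -
      have "I \<noteq> K" using nKH I(3) by blast
      hence ne: "I \<noteq> carrier ?L" by simp
      have sI: "subgroup I ?L" using group.subgroup_incl[OF grp I(1) K I(2)] .
      have "q dvd card (FixS ?L q I)" using group.fix_sub[OF gL finK qpos sI ne] .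
      hence "int (card (FixS ?L q I)) mod int q = 0" by (simp add: of_nat_mod[symmetric] del: of_nat_mod)
      thus ?thesis using phic[OF I(2)] by simp
    qed
    thus ?thesis using K cA unfolding p_ideal_def by auto
  qed
  moreover have "c \<notin> p_ideal G K q K"
  proof
    assume "c \<in> p_ideal G K q K"
    moreover have "subconj G K K" using group.subconj_refl[OF grp Kc] .
    ultimately have z: "phi K q c = 0" using K unfolding p_ideal_def by auto
    obtain k where k: "card K = p ^ k" using group.card_subgroup_pow[OF grp fin p n K] by blast
    have nd: "\<not> q dvd card (carrier ?L)"
    proof
      assume "q dvd card (carrier ?L)"
      hence "q dvd p ^ k" using k by simp
      hence "q dvd p" using prime_dvd_power[OF q(1)] by blast
      thus False using primes_dvd_imp_eq[OF q(1) p] q(2) by blast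
    qed
    have "card (FixS ?L q K) = 1" using group.fix_all[OF gL finK q(1) nd] by simp
    hence "phi K q c = 1 mod int q" using phic[of K] by simp
    moreover have "q > 1" using q(1) prime_gt_1_nat by blast
    ultimately show False using z by simp
  qed
  ultimately show ?thesis by blast
qed

theorem corollary4p17:
  fixes G :: "('a, 'b) monoid_scheme" and p :: nat
  assumes "group G" and "finite (carrier G)" and "prime p"
    and "\<exists>n. card (carrier G) = p ^ n"
  shows "(\<forall>H K. subgroup H G \<longrightarrow> subgroup K G \<longrightarrow> p_ideal G H p = p_ideal G K p) \<and>
         (\<forall>q H K. prime q \<longrightarrow> q \<noteq> p \<longrightarrow> subgroup H G \<longrightarrow> subgroup K G \<longrightarrow>
            (p_ideal G H q = p_ideal G K q \<longleftrightarrow> conjugate G H K))"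
proof -
  obtain n where n: "card (carrier G) = p ^ n" using assms(4) by blast
  note grp = assms(1) and fin = assms(2) and p = assms(3)
  have part1: "p_ideal G H p = p_ideal G K p" if H: "subgroup H G" and K: "subgroup K G" for H K
  proof
    fix L show "p_ideal G H p L = p_ideal G K p L"
      using pideal_p[OF grp fin p n H] pideal_p[OF grp fin p n K] by simp
  qed
  have part2: "p_ideal G H q = p_ideal G K q \<longleftrightarrow> conjugate G H K"
    if q: "prime q" "q \<noteq> p" and H: "subgroup H G" and K: "subgroup K G" for q H K
  proof
    assume eq: "p_ideal G H q = p_ideal G K q"
    show "conjugate G H K"
    proof (rule ccontr)
      assume nc: "\<not> conjugate G H K"
      show False
      proof (cases "subconj G K H")
        case True
        hence "\<not> subconj G H K" using nc group.both_subconj[OF grp fin H K] by blast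
        hence "p_ideal G K q H \<noteq> p_ideal G H q H" using key[OF grp fin p n q K H] by blast
        thus False using eq by simp
      next
        case False
        hence "p_ideal G H q K \<noteq> p_ideal G K q K" using key[OF grp fin p n q H K] by blast
        thus False using eq by simp
      qed
    qed
  next
    assume c: "conjugate G H K"
    have Hc: "H \<subseteq> carrier G" and Kc: "K \<subseteq> carrier G" using H K subgroup.subset by blast+
    have c': "conjugate G K H" using group.conjugate_sym[OF grp Hc c] .
    have iff: "subconj G I H \<longleftrightarrow> subconj G I K" if I: "subgroup I G" for I
    proof -
      have Ic: "I \<subseteq> carrier G" using I subgroup.subset by blast
      show ?thesis
        using group.subconj_trans[OF grp Ic Hc _ group.conjugate_subconj[OF grp c]]
              group.subconj_trans[OF grp Ic Kc _ group.conjugate_subconj[OF grp c']] by blast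
    qed
    show "p_ideal G H q = p_ideal G K q"
    proof
      fix L show "p_ideal G H q L = p_ideal G K q L"
        unfolding p_ideal_def using iff by auto
    qed
  qed
  show ?thesis using part1 part2 by blast
qed

end
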